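(* Let $\mathfrak k$ be a finite-dimensional Lie algebra such that $Y(\mathfrak k)$ is a unique factorisation domain. Let $\lambda\neq0$ be the weight of a semi-invariant $x$ which is irreducible in $S(\mathfrak k)$. Then at least one of the $Y(\mathfrak k)$-modules $S(\mathfrak k)_\lambda$ and $S(\mathfrak k)_{-\lambda}$ is free of rank at most $1$.
   Context: For a finite-dimensional Lie algebra $\mathfrak k$ over an algebraically closed field $\mathbb C$ of characteristic $0$, the adjoint action extends to $S(\mathfrak k)$ by derivations. $Y(\mathfrak k)$ is the algebra of invariants; for $\mu\in\mathfrak k^*$, $S(\mathfrak k)_\mu=\{f\in S(\mathfrak k): x\cdot f=\mu(x)f\ \forall x\in\mathfrak k\}$, a $Y(\mathfrak k)$-module. A semi-invariant is a nonzero element of some $S(\mathfrak k)_\mu$, $\mu$ being its weight. *)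

theory Defs
  imports "HOL-Library.Poly_Mapping" "HOL-Algebra.Ring_Divisibility"
begin

text \<open>A Lie algebra k of dimension n over the complex numbers, given by its
structure constants w.r.t. a basis e_0,...,e_(n-1):
  [e_i, e_j] = sum over l < n of c i j l * e_l.\<close>

definition lie_structure :: "nat \<Rightarrow> (nat \<Rightarrow> nat \<Rightarrow> nat \<Rightarrow> complex) \<Rightarrow> bool" where
  "lie_structure n c \<longleftrightarrow>
     (\<forall>i<n. \<forall>l<n. c i i l = 0) \<and>
     (\<forall>i<n. \<forall>j<n. \<forall>l<n. c i j l = - c j i l) \<and>
     (\<forall>i<n. \<forall>j<n. \<forall>k<n. \<forall>m<n.
        (\<Sum>l<n. c i j l * c l k m + c j k l * c l i m + c k i l * c l j m) = 0)"

type_synonym cpoly = "(nat \<Rightarrow>\<^sub>0 nat) \<Rightarrow>\<^sub>0 complex"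

definition Var :: "nat \<Rightarrow> cpoly" where
  "Var k = Poly_Mapping.single (Poly_Mapping.single k 1) 1"

definition pdiff :: "nat \<Rightarrow> cpoly \<Rightarrow> cpoly" where
  "pdiff j f = (\<Sum>m\<in>Poly_Mapping.keys f.
      Poly_Mapping.single (m - Poly_Mapping.single j 1)
        (Poly_Mapping.lookup f m * of_nat (Poly_Mapping.lookup m j)))"

text \<open>The symmetric algebra S(k) = C[X_0,...,X_(n-1)] (X_i standing for e_i).\<close>
definition Salg :: "nat \<Rightarrow> cpoly set" where
  "Salg n = {f. \<forall>m\<in>Poly_Mapping.keys f. \<forall>j\<in>Poly_Mapping.keys m. j < n}"

text \<open>Adjoint action of e_i on S(k), the derivation extending ad e_i:
  e_i . X_j = sum_l c i j l X_l.\<close>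
definition adS :: "nat \<Rightarrow> (nat \<Rightarrow> nat \<Rightarrow> nat \<Rightarrow> complex) \<Rightarrow> nat \<Rightarrow> cpoly \<Rightarrow> cpoly" where
  "adS n c i f = (\<Sum>j<n. (\<Sum>l<n. Poly_Mapping.single 0 (c i j l) * Var l) * pdiff j f)"

text \<open>Weight space S(k)_mu, mu in k^* given by its values mu i = mu(e_i).
  By linearity the condition on all x in k reduces to the basis vectors.\<close>
definition weight_space :: "nat \<Rightarrow> (nat \<Rightarrow> nat \<Rightarrow> nat \<Rightarrow> complex) \<Rightarrow> (nat \<Rightarrow> complex) \<Rightarrow> cpoly set" where
  "weight_space n c mu = {f \<in> Salg n. \<forall>i<n. adS n c i f = Poly_Mapping.single 0 (mu i) * f}"

definition Yinv :: "nat \<Rightarrow> (nat \<Rightarrow> nat \<Rightarrow> nat \<Rightarrow> complex) \<Rightarrow> cpoly set" where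
  "Yinv n c = weight_space n c (\<lambda>_. 0)"

definition poly_ring :: "cpoly set \<Rightarrow> cpoly ring" where
  "poly_ring A = \<lparr>carrier = A, monoid.mult = (*), one = 1, zero = 0, add = (+)\<rparr>"

text \<open>M is a free A-module of rank at most 1 (rank 0: M = 0; rank 1: M = A g
  with g a basis element, i.e. a g = 0 implies a = 0).\<close>
definition free_rank_le_1 :: "cpoly set \<Rightarrow> cpoly set \<Rightarrow> bool" where
  "free_rank_le_1 A M \<longleftrightarrow> M = {0} \<or>
     (\<exists>g\<in>M. M = {a * g | a. a \<in> A} \<and> (\<forall>a\<in>A. a * g = 0 \<longrightarrow> a = 0))"

end

theory Submission
  imports Defs "HOL-Computational_Algebra.Polynomial"
begin

abbreviation lk where "lk \<equiv> Poly_Mapping.lookup"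
abbreviation ks where "ks \<equiv> Poly_Mapping.keys"
abbreviation sng where "sng \<equiv> Poly_Mapping.single"

lemma lookup_mult_single:
  fixes c :: "('a::cancel_comm_monoid_add \<Rightarrow>\<^sub>0 'b::comm_semiring_1)"
  shows "lk (c * sng s b) m = (if \<exists>l. m = l + s then lk c (m - s) * b else 0)"
proof -
  have "lk (c * sng s b) m = (\<Sum>l. lk c l * (b when m = l + s))"
  proof -
    have "\<And>l. (\<Sum>q. lk (sng s b) q when m = l + q) = (b when m = l + s)"
    proof -
      fix l
      have "(\<Sum>q. lk (sng s b) q when m = l + q) = (\<Sum>q. (b when m = l + q) when s = q)"
        by (rule Sum_any.cong) (simp add: lookup_single when_def)
      then show "(\<Sum>q. lk (sng s b) q when m = l + q) = (b when m = l + s)" by simp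
    qed
    then show ?thesis by (simp add: lookup_mult)
  qed
  also have "\<dots> = (\<Sum>l. (lk c l * b when l = m - s) when (\<exists>l. m = l + s))"
    by (rule Sum_any.cong) (auto simp: when_def)
  also have "\<dots> = (if \<exists>l. m = l + s then lk c (m - s) * b else 0)"
    by (simp add: Sum_any_when_independent when_def)
  finally show ?thesis .
qed

lemma Var_pow: "Var j ^ k = sng (sng j k) 1"
proof (induction k)
  case 0 then show ?case by simp
next
  case (Suc k)
  have "Var j ^ Suc k = Var j * Var j ^ k" by simp
  also have "\<dots> = sng (sng j 1) 1 * sng (sng j k) 1" unfolding Suc.IH by (simp add: Var_def)
  also have "\<dots> = sng (sng j (Suc k)) 1" by (simp add: mult_single single_add[symmetric])
  finally show ?case .
qed

lemma exists_add_single_iff: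
  fixes m :: "nat \<Rightarrow>\<^sub>0 nat"
  shows "(\<exists>l. m = l + sng j k) \<longleftrightarrow> k \<le> lk m j"
proof
  assume "\<exists>l. m = l + sng j k"
  then obtain l where "m = l + sng j k" by blast
  then show "k \<le> lk m j" by (simp add: lookup_add)
next
  assume a: "k \<le> lk m j"
  have "m = (m - sng j k) + sng j k"
    by (rule poly_mapping_eqI) (use a in \<open>auto simp: lookup_add lookup_minus lookup_single when_def\<close>)
  then show "\<exists>l. m = l + sng j k" by blast
qed

lemma lookup_mult_Var_pow:
  "lk (c * Var j ^ k) m = (if k \<le> lk m j then lk c (m - sng j k) else 0)"
  by (simp add: Var_pow lookup_mult_single exists_add_single_iff)

definition avoid :: "nat \<Rightarrow> cpoly set" where
  "avoid j = {f. \<forall>m\<in>ks f. lk m j = 0}"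

definition phi :: "nat \<Rightarrow> cpoly poly \<Rightarrow> cpoly" where
  "phi j p = poly p (Var j)"

definition PA :: "nat \<Rightarrow> cpoly poly set" where
  "PA j = {p. \<forall>i. coeff p i \<in> avoid j}"

lemma avoid_lookup: "c \<in> avoid j \<Longrightarrow> lk m j \<noteq> 0 \<Longrightarrow> lk c m = 0"
proof -
  assume "c \<in> avoid j" "lk m j \<noteq> 0"
  then have "m \<notin> ks c" unfolding avoid_def by auto
  then show ?thesis by (simp add: in_keys_iff)
qed

lemma lookup_mult_Var_pow_avoid:
  assumes "c \<in> avoid j"
  shows "lk (c * Var j ^ k) m = (if lk m j = k then lk c (m - sng j k) else 0)"
proof (cases "k \<le> lk m j")
  case True
  show ?thesis
  proof (cases "lk m j = k")
    case False
    then have "lk (m - sng j k) j \<noteq> 0" using True by (simp add: lookup_minus)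
    then show ?thesis using avoid_lookup[OF assms] False by (simp add: lookup_mult_Var_pow)
  qed (simp add: lookup_mult_Var_pow)
next
  case False
  then have "lk m j \<noteq> k" by simp
  with False show ?thesis by (simp add: lookup_mult_Var_pow)
qed

lemma lookup_phi:
  assumes "p \<in> PA j"
  shows "lk (phi j p) m = lk (coeff p (lk m j)) (m - sng j (lk m j))"
proof -
  have "lk (phi j p) m = (\<Sum>i\<le>degree p. lk (coeff p i * Var j ^ i) m)"
    by (simp add: phi_def poly_altdef lookup_sum)
  also have "\<dots> = (\<Sum>i\<le>degree p. if lk m j = i then lk (coeff p i) (m - sng j i) else 0)"
    using assms by (intro sum.cong refl) (simp add: PA_def lookup_mult_Var_pow_avoid)
  also have "\<dots> = (if lk m j \<le> degree p then lk (coeff p (lk m j)) (m - sng j (lk m j)) else 0)"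
    by (simp add: sum.delta)
  also have "\<dots> = lk (coeff p (lk m j)) (m - sng j (lk m j))"
    by (auto simp: coeff_eq_0)
  finally show ?thesis .
qed

lemma avoid_0[simp]: "0 \<in> avoid j" by (simp add: avoid_def)
lemma avoid_const[simp]: "sng 0 a \<in> avoid j" by (simp add: avoid_def)
lemma avoid_1[simp]: "1 \<in> avoid j" by (simp add: avoid_def)
lemma avoid_add: assumes "a \<in> avoid j" "b \<in> avoid j" shows "a + b \<in> avoid j"
proof -
  have "\<forall>m\<in>ks (a + b). lk m j = 0"
  proof
    fix m assume "m \<in> ks (a + b)"
    then have "m \<in> ks a \<or> m \<in> ks b" using keys_add[of a b] by blast
    then show "lk m j = 0" using assms unfolding avoid_def by blast
  qed
  then show ?thesis by (simp add: avoid_def)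
qed
lemma avoid_uminus: assumes "a \<in> avoid j" shows "- a \<in> avoid j"
proof -
  have "ks (- a) = ks a" by (simp add: in_keys_iff set_eq_iff)
  then show ?thesis using assms by (simp add: avoid_def)
qed
lemma avoid_mult: assumes a: "a \<in> avoid j" and b: "b \<in> avoid j" shows "a * b \<in> avoid j"
proof -
  have "\<forall>m\<in>ks (a * b). lk m j = 0"
  proof
    fix m assume "m \<in> ks (a * b)"
    then obtain u v where "u \<in> ks a" "v \<in> ks b" "m = u + v" using keys_mult[of a b] by blast
    then show "lk m j = 0" using a b by (simp add: avoid_def lookup_add)
  qed
  then show ?thesis by (simp add: avoid_def)
qed
lemma avoid_sum: "(\<And>i. i \<in> A \<Longrightarrow> f i \<in> avoid j) \<Longrightarrow> sum f A \<in> avoid j"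
proof (induction A rule: infinite_finite_induct)
  case (insert x F)
  then show ?case by (simp add: avoid_add)
qed simp_all
lemma avoid_of_nat[simp]: "of_nat k \<in> avoid j"
  using avoid_const[of "of_nat k" j] by (simp only: single_of_nat)

lemma PA_mult: "p \<in> PA j \<Longrightarrow> q \<in> PA j \<Longrightarrow> p * q \<in> PA j"
  unfolding PA_def by (simp add: coeff_mult avoid_sum avoid_mult)
lemma PA_add: "p \<in> PA j \<Longrightarrow> q \<in> PA j \<Longrightarrow> p + q \<in> PA j"
  unfolding PA_def by (simp add: avoid_add)
lemma PA_pderiv: "p \<in> PA j \<Longrightarrow> pderiv p \<in> PA j"
  unfolding PA_def by (simp add: coeff_pderiv avoid_mult del: of_nat_Suc)

lemma phi_inj:
  assumes "p \<in> PA j" "q \<in> PA j" "phi j p = phi j q"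
  shows "p = q"
proof (rule poly_eqI, rule poly_mapping_eqI)
  fix i m
  show "lk (coeff p i) m = lk (coeff q i) m"
  proof (cases "lk m j = 0")
    case True
    define m' where "m' = m + sng j i"
    have "lk m' j = i" using True by (simp add: m'_def lookup_add)
    moreover have "m' - sng j i = m" by (simp add: m'_def)
    note eqs = \<open>lk m' j = i\<close> \<open>m' - sng j i = m\<close>
    have "lk (phi j p) m' = lk (coeff p i) m" using lookup_phi[OF assms(1), of m'] eqs by simp
    moreover have "lk (phi j q) m' = lk (coeff q i) m" using lookup_phi[OF assms(2), of m'] eqs by simp
    ultimately show ?thesis using assms(3) by simp
  next
    case False
    then show ?thesis using assms(1,2) avoid_lookup[of "coeff p i" j m] avoid_lookup[of "coeff q i" j m]
      by (simp add: PA_def)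
  qed
qed

lemma phi_mult: "phi j (p * q) = phi j p * phi j q" by (simp add: phi_def)
lemma phi_add: "phi j (p + q) = phi j p + phi j q" by (simp add: phi_def)

lemma phi_minus: "phi j (- p) = - phi j p" by (simp add: phi_def)
lemma phi_diff: "phi j (p - q) = phi j p - phi j q" by (simp add: phi_def)
lemma phi_const: "phi j [:c:] = c" by (simp add: phi_def)

definition Ck :: "nat \<Rightarrow> nat \<Rightarrow> cpoly \<Rightarrow> cpoly" where
  "Ck j k f = Abs_poly_mapping (\<lambda>m. if lk m j = 0 then lk f (m + sng j k) else 0)"

lemma lookup_Ck: "lk (Ck j k f) m = (if lk m j = 0 then lk f (m + sng j k) else 0)"
proof -
  have "{m. (if lk m j = 0 then lk f (m + sng j k) else 0) \<noteq> 0} \<subseteq> (\<lambda>m'. m' - sng j k) ` ks f"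
  proof
    fix m assume "m \<in> {m. (if lk m j = 0 then lk f (m + sng j k) else 0) \<noteq> 0}"
    then have "m + sng j k \<in> ks f" by (simp add: in_keys_iff split: if_splits)
    moreover have "m = (m + sng j k) - sng j k" by simp
    ultimately show "m \<in> (\<lambda>m'. m' - sng j k) ` ks f" by blast
  qed
  then have "finite {m. (if lk m j = 0 then lk f (m + sng j k) else 0) \<noteq> 0}"
    using finite_surj[OF finite_keys] by blast
  then show ?thesis unfolding Ck_def by simp
qed

definition psi :: "nat \<Rightarrow> cpoly \<Rightarrow> cpoly poly" where
  "psi j f = (\<Sum>k\<le>Max (insert 0 ((\<lambda>m. lk m j) ` ks f)). monom (Ck j k f) k)"

lemma Ck_big:
  assumes "\<not> k \<le> Max (insert 0 ((\<lambda>m. lk m j) ` ks f))"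
  shows "Ck j k f = 0"
proof (rule poly_mapping_eqI)
  fix m
  show "lk (Ck j k f) m = lk 0 m"
  proof (cases "lk m j = 0")
    case True
    have "m + sng j k \<notin> ks f"
    proof
      assume "m + sng j k \<in> ks f"
      then have "lk (m + sng j k) j \<le> Max (insert 0 ((\<lambda>m. lk m j) ` ks f))"
        by (intro Max_ge) auto
      then show False using assms True by (simp add: lookup_add)
    qed
    then show ?thesis by (simp add: lookup_Ck in_keys_iff)
  qed (simp add: lookup_Ck)
qed

lemma coeff_psi: "coeff (psi j f) k = Ck j k f"
proof (cases "k \<le> Max (insert 0 ((\<lambda>m. lk m j) ` ks f))")
  case True
  then show ?thesis unfolding psi_def coeff_sum coeff_monom by (simp add: sum.delta)
next
  case False
  then have "Ck j k f = 0" by (rule Ck_big)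
  then show ?thesis using False unfolding psi_def coeff_sum coeff_monom by (simp add: sum.delta)
qed

lemma psi_PA: "psi j f \<in> PA j"
proof -
  have "Ck j k f \<in> avoid j" for k
    unfolding avoid_def by (auto simp: in_keys_iff lookup_Ck split: if_splits)
  then show ?thesis by (simp add: PA_def coeff_psi)
qed

lemma add_sub_single_cancel:
  fixes m :: "nat \<Rightarrow>\<^sub>0 nat"
  shows "(m - sng j (lk m j)) + sng j (lk m j) = m"
  by (rule poly_mapping_eqI) (simp add: lookup_add lookup_minus lookup_single when_def)

lemma phi_psi: "phi j (psi j f) = f"
proof (rule poly_mapping_eqI)
  fix m :: "nat \<Rightarrow>\<^sub>0 nat"
  have "lk (m - sng j (lk m j)) j = 0" by (simp add: lookup_minus)
  then show "lk (phi j (psi j f)) m = lk f m"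
    by (simp add: lookup_phi[OF psi_PA] coeff_psi lookup_Ck add_sub_single_cancel)
qed

lemma phi_surj: "\<exists>p\<in>PA j. phi j p = f"
  using psi_PA phi_psi by blast

lemma Salg_avoid: assumes "f \<in> Salg n" shows "f \<in> avoid n"
proof -
  have "\<forall>m\<in>ks f. lk m n = 0"
  proof
    fix m assume "m \<in> ks f"
    then have "n \<notin> ks m" using assms unfolding Salg_def by blast
    then show "lk m n = 0" by (simp add: in_keys_iff)
  qed
  then show ?thesis by (simp add: avoid_def)
qed

lemma SalgD: "f \<in> Salg n \<Longrightarrow> m \<in> ks f \<Longrightarrow> i \<in> ks m \<Longrightarrow> i < n"
  unfolding Salg_def by auto

lemma Salg_0[simp]: "0 \<in> Salg n" by (simp add: Salg_def)
lemma Salg_const[simp]: "sng 0 a \<in> Salg n" by (simp add: Salg_def)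
lemma Salg_1[simp]: "1 \<in> Salg n" by (simp add: Salg_def)
lemma Salg_add: assumes "a \<in> Salg n" "b \<in> Salg n" shows "a + b \<in> Salg n"
proof -
  have "\<forall>m\<in>ks (a + b). \<forall>i\<in>ks m. i < n"
  proof
    fix m assume "m \<in> ks (a + b)"
    then have "m \<in> ks a \<or> m \<in> ks b" using keys_add[of a b] by blast
    then show "\<forall>i\<in>ks m. i < n"
    proof
      assume "m \<in> ks a" then show ?thesis using SalgD[OF assms(1)] by blast
    next
      assume "m \<in> ks b" then show ?thesis using SalgD[OF assms(2)] by blast
    qed
  qed
  then show ?thesis by (simp add: Salg_def)
qed
lemma Salg_uminus: assumes "a \<in> Salg n" shows "- a \<in> Salg n"
proof -
  have "ks (- a) = ks a" by (simp add: in_keys_iff set_eq_iff)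
  then show ?thesis using assms by (simp add: Salg_def)
qed
lemma Salg_diff: "a \<in> Salg n \<Longrightarrow> b \<in> Salg n \<Longrightarrow> a - b \<in> Salg n"
  unfolding diff_conv_add_uminus by (intro Salg_add Salg_uminus)
lemma Salg_mult: assumes a: "a \<in> Salg n" and b: "b \<in> Salg n" shows "a * b \<in> Salg n"
proof -
  have "\<forall>m\<in>ks (a * b). \<forall>i\<in>ks m. i < n"
  proof
    fix m assume "m \<in> ks (a * b)"
    then obtain u v where uv: "u \<in> ks a" "v \<in> ks b" "m = u + v" using keys_mult[of a b] by blast
    have "ks m \<subseteq> ks u \<union> ks v" unfolding uv(3) by (rule keys_add)
    then show "\<forall>i\<in>ks m. i < n" using SalgD[OF a uv(1)] SalgD[OF b uv(2)] by auto
  qed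
  then show ?thesis by (simp add: Salg_def)
qed
lemma Salg_sum: "(\<And>i. i \<in> A \<Longrightarrow> f i \<in> Salg n) \<Longrightarrow> sum f A \<in> Salg n"
proof (induction A rule: infinite_finite_induct)
  case (insert x F)
  then show ?case by (simp add: Salg_add)
qed simp_all
lemma Salg_mono: "m \<le> n \<Longrightarrow> f \<in> Salg m \<Longrightarrow> f \<in> Salg n"
proof -
  assume "m \<le> n" "f \<in> Salg m"
  then show ?thesis unfolding Salg_def using SalgD[of f m] by (auto intro: less_le_trans)
qed

lemma phi_Salg:
  assumes "\<forall>i. coeff p i \<in> Salg n"
  shows "phi n p \<in> Salg (Suc n)"
proof -
  have pA: "p \<in> PA n" using assms Salg_avoid by (simp add: PA_def)
  have "\<forall>m\<in>ks (phi n p). \<forall>i\<in>ks m. i < Suc n"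
  proof (intro ballI)
    fix m i assume m: "m \<in> ks (phi n p)" and i: "i \<in> ks m"
    show "i < Suc n"
    proof (cases "i = n")
      case False
      have "m - sng n (lk m n) \<in> ks (coeff p (lk m n))"
        using m by (simp add: in_keys_iff lookup_phi[OF pA])
      moreover have "i \<in> ks (m - sng n (lk m n))"
        using i False by (simp add: in_keys_iff lookup_minus lookup_single)
      ultimately have "i < n" using assms SalgD by blast
      then show ?thesis by simp
    qed simp
  qed
  then show ?thesis by (simp add: Salg_def)
qed

lemma psi_Salg:
  assumes "f \<in> Salg (Suc n)"
  shows "coeff (psi n f) k \<in> Salg n"
proof -
  have "\<forall>m\<in>ks (Ck n k f). \<forall>i\<in>ks m. i < n"
  proof (intro ballI)
    fix m i assume m: "m \<in> ks (Ck n k f)" and i: "i \<in> ks m"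
    have mn: "lk m n = 0" and mk: "m + sng n k \<in> ks f"
      using m by (auto simp: in_keys_iff lookup_Ck split: if_splits)
    have "i \<in> ks (m + sng n k)" using i by (simp add: in_keys_iff lookup_add)
    then have "i < Suc n" using SalgD[OF assms mk] by blast
    moreover have "i \<noteq> n" using i mn by (auto simp: in_keys_iff)
    ultimately show "i < n" by simp
  qed
  then show ?thesis by (simp add: Salg_def coeff_psi)
qed

lemma sub_single_one_eq:
  fixes m m' :: "nat \<Rightarrow>\<^sub>0 nat"
  assumes "lk m' j \<noteq> 0" "m' - sng j 1 = m"
  shows "m' = m + sng j 1"
proof (rule poly_mapping_eqI)
  fix i
  have "lk m i = lk m' i - (if j = i then 1 else 0)"
    using assms(2)[symmetric] by (simp add: lookup_minus lookup_single when_def)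
  then show "lk m' i = lk (m + sng j 1) i"
    using assms(1) by (auto simp: lookup_add lookup_single when_def)
qed

lemma lookup_pdiff: "lk (pdiff j f) m = lk f (m + sng j 1) * of_nat (lk m j + 1)"
proof -
  have "lk (pdiff j f) m = (\<Sum>m'\<in>ks f. (lk f m' * of_nat (lk m' j) when m' - sng j 1 = m))"
    by (simp add: pdiff_def lookup_sum lookup_single)
  also have "\<dots> = (\<Sum>m'\<in>ks f. if m' = m + sng j 1 then lk f m' * of_nat (lk m' j) else 0)"
  proof (rule sum.cong[OF refl])
    fix m' assume "m' \<in> ks f"
    show "(lk f m' * of_nat (lk m' j) when m' - sng j 1 = m) =
          (if m' = m + sng j 1 then lk f m' * of_nat (lk m' j) else 0)"
    proof (cases "m' = m + sng j 1")
      case True then show ?thesis by simp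
    next
      case False
      then have "lk m' j = 0 \<or> m' - sng j 1 \<noteq> m" using sub_single_one_eq by blast
      then show ?thesis using False by (auto simp: when_def)
    qed
  qed
  also have "\<dots> = (if m + sng j 1 \<in> ks f then lk f (m + sng j 1) * of_nat (lk (m + sng j 1) j) else 0)"
    by (simp add: sum.delta')
  also have "\<dots> = lk f (m + sng j 1) * of_nat (lk m j + 1)"
    by (auto simp: in_keys_iff lookup_add)
  finally show ?thesis .
qed

lemma lookup_of_nat_mult: "lk (of_nat k * c) m = of_nat k * lk (c :: cpoly) m"
proof -
  have eq: "(of_nat k :: cpoly) = sng 0 (of_nat k)" by simp
  have A: "lk (c * sng 0 (of_nat k)) m = lk c m * of_nat k" by (subst lookup_mult_single) simp
  have B: "of_nat k * c = c * sng 0 (of_nat k)" by (simp add: mult.commute)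
  show ?thesis unfolding B A by (rule mult.commute)
qed

lemma pdiff_phi:
  assumes "p \<in> PA j"
  shows "pdiff j (phi j p) = phi j (pderiv p)"
proof (rule poly_mapping_eqI)
  fix m :: "nat \<Rightarrow>\<^sub>0 nat"
  have e: "m + sng j (Suc 0) - sng j (Suc (lk m j)) = m - sng j (lk m j)"
    by (rule poly_mapping_eqI) (simp add: lookup_add lookup_minus lookup_single when_def)
  show "lk (pdiff j (phi j p)) m = lk (phi j (pderiv p)) m"
    unfolding lookup_pdiff lookup_phi[OF assms] lookup_phi[OF PA_pderiv[OF assms]]
    by (simp add: lookup_add e coeff_pderiv lookup_of_nat_mult del: of_nat_Suc)
qed

lemma pdiff_mult: "pdiff j (f * g) = pdiff j f * g + f * pdiff j g"
proof -
  obtain p where p: "p \<in> PA j" "phi j p = f" using phi_surj by blast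
  obtain q where q: "q \<in> PA j" "phi j q = g" using phi_surj by blast
  have "pdiff j (f * g) = pdiff j (phi j (p * q))" using p q by (simp add: phi_mult)
  also have "\<dots> = phi j (pderiv (p * q))" by (rule pdiff_phi[OF PA_mult[OF p(1) q(1)]])
  also have "\<dots> = phi j (pderiv p) * phi j q + phi j p * phi j (pderiv q)"
    by (simp add: pderiv_mult phi_add phi_mult algebra_simps)
  also have "\<dots> = pdiff j f * g + f * pdiff j g"
  proof -
    have "pdiff j f = phi j (pderiv p)" using pdiff_phi[OF p(1)] p(2) by simp
    moreover have "pdiff j g = phi j (pderiv q)" using pdiff_phi[OF q(1)] q(2) by simp
    ultimately show ?thesis using p q by simp
  qed
  finally show ?thesis .
qed

lemma pdiff_add: "pdiff j (f + g) = pdiff j f + pdiff j g"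
  by (rule poly_mapping_eqI) (simp add: lookup_pdiff lookup_add algebra_simps)

lemma pdiff_uminus: "pdiff j (- f) = - pdiff j f"
  by (rule poly_mapping_eqI) (simp add: lookup_pdiff)

lemma add_single_nz: "(m :: nat \<Rightarrow>\<^sub>0 nat) + sng j (Suc 0) \<noteq> 0"
proof
  assume "m + sng j (Suc 0) = 0"
  then have "lk (m + sng j (Suc 0)) j = 0" by simp
  then show False by (simp add: lookup_add)
qed

lemma pdiff_const: "pdiff j (sng 0 a) = 0"
proof (rule poly_mapping_eqI)
  fix m :: "nat \<Rightarrow>\<^sub>0 nat"
  have "0 \<noteq> m + sng j (Suc 0)" using add_single_nz[of m j] by auto
  then have "lk (sng 0 a) (m + sng j 1) = 0" by (simp add: lookup_single)
  then show "lk (pdiff j (sng 0 a)) m = lk 0 m"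
    by (simp add: lookup_pdiff)
qed

lemma adS_mult: "adS n c i (f * g) = adS n c i f * g + f * adS n c i g"
  unfolding adS_def pdiff_mult by (simp add: algebra_simps sum.distrib sum_distrib_left sum_distrib_right)

lemma adS_add: "adS n c i (f + g) = adS n c i f + adS n c i g"
  unfolding adS_def pdiff_add by (simp add: algebra_simps sum.distrib)

lemma adS_uminus: "adS n c i (- f) = - adS n c i f"
  unfolding adS_def pdiff_uminus by (simp add: sum_negf)

lemma adS_const: "adS n c i (sng 0 a) = 0"
  unfolding adS_def pdiff_const by simp


definition rdvd :: "'a::comm_ring_1 set \<Rightarrow> 'a \<Rightarrow> 'a \<Rightarrow> bool" where
  "rdvd R a b \<longleftrightarrow> (\<exists>c\<in>R. b = a * c)"
definition runit :: "'a::comm_ring_1 set \<Rightarrow> 'a \<Rightarrow> bool" where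
  "runit R a \<longleftrightarrow> a \<in> R \<and> (\<exists>b\<in>R. a * b = 1)"
definition rirred :: "'a::comm_ring_1 set \<Rightarrow> 'a \<Rightarrow> bool" where
  "rirred R p \<longleftrightarrow> p \<in> R \<and> p \<noteq> 0 \<and> \<not> runit R p \<and> (\<forall>a\<in>R. \<forall>b\<in>R. p = a * b \<longrightarrow> runit R a \<or> runit R b)"
definition rprime :: "'a::comm_ring_1 set \<Rightarrow> 'a \<Rightarrow> bool" where
  "rprime R p \<longleftrightarrow> p \<in> R \<and> p \<noteq> 0 \<and> \<not> runit R p \<and> (\<forall>a\<in>R. \<forall>b\<in>R. rdvd R p (a * b) \<longrightarrow> rdvd R p a \<or> rdvd R p b)"
definition sr :: "'a::comm_ring_1 set \<Rightarrow> bool" where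
  "sr R \<longleftrightarrow> 0 \<in> R \<and> 1 \<in> R \<and> (\<forall>a\<in>R. \<forall>b\<in>R. a + b \<in> R \<and> a * b \<in> R \<and> - a \<in> R)"
definition PR :: "'a::comm_ring_1 set \<Rightarrow> 'a poly set" where
  "PR R = {p. \<forall>i. coeff p i \<in> R}"

locale ufdR =
  fixes R :: "'a::idom set" and \<mu> :: "'a \<Rightarrow> nat"
  assumes sr: "sr R"
    and irr_prime: "\<And>p. rirred R p \<Longrightarrow> rprime R p"
    and mu_mult: "\<And>a b. a \<in> R \<Longrightarrow> b \<in> R \<Longrightarrow> a \<noteq> 0 \<Longrightarrow> b \<noteq> 0 \<Longrightarrow> \<mu> (a * b) = \<mu> a + \<mu> b"
    and mu_zero: "\<And>a. a \<in> R \<Longrightarrow> a \<noteq> 0 \<Longrightarrow> \<mu> a = 0 \<longleftrightarrow> runit R a"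
begin

lemma R0[simp]: "0 \<in> R" using sr by (simp add: sr_def)
lemma R1[simp]: "1 \<in> R" using sr by (simp add: sr_def)
lemma Radd[intro]: "a \<in> R \<Longrightarrow> b \<in> R \<Longrightarrow> a + b \<in> R" using sr by (simp add: sr_def)
lemma Rmult[intro]: "a \<in> R \<Longrightarrow> b \<in> R \<Longrightarrow> a * b \<in> R" using sr by (simp add: sr_def)
lemma Rneg[intro]: "a \<in> R \<Longrightarrow> - a \<in> R" using sr by (simp add: sr_def)
lemma Rdiff[intro]: "a \<in> R \<Longrightarrow> b \<in> R \<Longrightarrow> a - b \<in> R"
  unfolding diff_conv_add_uminus by (intro Radd Rneg)
lemma Rpow[intro]: "a \<in> R \<Longrightarrow> a ^ k \<in> R"
  by (induction k) auto
lemma Rsum[intro]: "(\<And>i. i \<in> A \<Longrightarrow> f i \<in> R) \<Longrightarrow> sum f A \<in> R"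
proof (induction A rule: infinite_finite_induct)
  case (insert x F) then show ?case by (simp add: Radd)
qed simp_all

lemma PR_iff: "p \<in> PR R \<longleftrightarrow> (\<forall>i. coeff p i \<in> R)" by (simp add: PR_def)
lemma PR_coeff: "p \<in> PR R \<Longrightarrow> coeff p i \<in> R" by (simp add: PR_def)
lemma PR_0[simp]: "0 \<in> PR R" by (simp add: PR_def)
lemma PR_const[simp]: "[:c:] \<in> PR R \<longleftrightarrow> c \<in> R"
  by (auto simp: PR_def coeff_pCons split: nat.splits)
lemma PR_1[simp]: "1 \<in> PR R" using PR_const[of 1] by (simp add: one_pCons)
lemma PR_add[intro]: "p \<in> PR R \<Longrightarrow> q \<in> PR R \<Longrightarrow> p + q \<in> PR R" by (simp add: PR_def Radd)
lemma PR_neg[intro]: "p \<in> PR R \<Longrightarrow> - p \<in> PR R" by (simp add: PR_def Rneg)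
lemma PR_diff[intro]: "p \<in> PR R \<Longrightarrow> q \<in> PR R \<Longrightarrow> p - q \<in> PR R" by (simp add: PR_def Rdiff)
lemma PR_mult[intro]: assumes "p \<in> PR R" "q \<in> PR R" shows "p * q \<in> PR R"
proof -
  have "coeff (p * q) i \<in> R" for i
    unfolding coeff_mult by (intro Rsum Rmult PR_coeff assms)
  then show ?thesis by (simp add: PR_def)
qed
lemma PR_smult[intro]: "c \<in> R \<Longrightarrow> p \<in> PR R \<Longrightarrow> smult c p \<in> PR R" by (simp add: PR_def Rmult)
lemma PR_monom[intro]: "c \<in> R \<Longrightarrow> monom c d \<in> PR R" by (simp add: PR_def)
lemma lc_R: "p \<in> PR R \<Longrightarrow> lead_coeff p \<in> R" by (simp add: PR_coeff)

lemma runit_PR: "runit (PR R) p \<longleftrightarrow> p \<in> PR R \<and> degree p = 0 \<and> runit R (coeff p 0)"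
proof
  assume u: "runit (PR R) p"
  then obtain q where q: "q \<in> PR R" "p * q = 1" "p \<in> PR R" by (auto simp: runit_def)
  then have "p \<noteq> 0" "q \<noteq> 0" by auto
  then have "degree p + degree q = 0" using q(2) degree_mult_eq[of p q] by simp
  then have d: "degree p = 0" "degree q = 0" by auto
  have "coeff (p * q) 0 = coeff p 0 * coeff q 0" by (simp add: coeff_mult)
  then have "coeff p 0 * coeff q 0 = 1" using q(2) by simp
  then show "p \<in> PR R \<and> degree p = 0 \<and> runit R (coeff p 0)"
    using q d by (auto simp: runit_def PR_coeff)
next
  assume a: "p \<in> PR R \<and> degree p = 0 \<and> runit R (coeff p 0)"
  then obtain b where b: "b \<in> R" "coeff p 0 * b = 1" by (auto simp: runit_def)
  have e: "p = [:coeff p 0:]" using a degree_0_id[of p] by simp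
  have "p * [:b:] = [:coeff p 0:] * [:b:]" using e by (rule arg_cong)
  also have "\<dots> = 1" using b by (simp add: one_pCons mult.commute)
  finally have "p * [:b:] = 1" .
  then show "runit (PR R) p" unfolding runit_def using a b(1) PR_const[of b] by blast
qed

lemma runit_R_mu: "runit R a \<Longrightarrow> a \<noteq> 0 \<Longrightarrow> \<mu> a = 0"
  using mu_zero by (auto simp: runit_def)

lemma rdvd_refl: "a \<in> R \<Longrightarrow> rdvd R a a"
  unfolding rdvd_def by (rule bexI[of _ 1]) auto
lemma rdvd_0: "rdvd R a 0"
  unfolding rdvd_def by (rule bexI[of _ 0]) auto
lemma rdvd_add: assumes "rdvd R a b" "rdvd R a c" shows "rdvd R a (b + c)"
proof -
  obtain c1 c2 where "c1 \<in> R" "b = a * c1" "c2 \<in> R" "c = a * c2" using assms unfolding rdvd_def by blast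
  then have "c1 + c2 \<in> R" "b + c = a * (c1 + c2)" by (auto simp: distrib_left)
  then show ?thesis unfolding rdvd_def by blast
qed
lemma rdvd_neg: "rdvd R a b \<Longrightarrow> rdvd R a (- b)"
  unfolding rdvd_def by (auto intro!: bexI[of _ "- c" for c] Rneg)
lemma rdvd_diff: "rdvd R a b \<Longrightarrow> rdvd R a c \<Longrightarrow> rdvd R a (b - c)"
  unfolding diff_conv_add_uminus by (intro rdvd_add rdvd_neg)
lemma rdvd_mult_right: "rdvd R a b \<Longrightarrow> c \<in> R \<Longrightarrow> rdvd R a (b * c)"
  unfolding rdvd_def by (auto intro!: bexI[of _ "d * c" for d] Rmult)
lemma rdvd_mult_left: "rdvd R a b \<Longrightarrow> c \<in> R \<Longrightarrow> rdvd R a (c * b)"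
  using rdvd_mult_right by (simp add: mult.commute)
lemma rdvd_sum: "(\<And>i. i \<in> A \<Longrightarrow> rdvd R a (f i)) \<Longrightarrow> rdvd R a (sum f A)"
proof (induction A rule: infinite_finite_induct)
  case (insert x F) then show ?case by (simp add: rdvd_add)
qed (simp_all add: rdvd_0)
lemma rdvd_times: "a \<in> R \<Longrightarrow> c \<in> R \<Longrightarrow> rdvd R a (a * c)"
  unfolding rdvd_def by blast

lemma prime_factor_exists:
  "a \<in> R \<Longrightarrow> a \<noteq> 0 \<Longrightarrow> \<not> runit R a \<Longrightarrow> \<exists>p c. rprime R p \<and> c \<in> R \<and> a = p * c \<and> \<mu> c < \<mu> a"
proof (induction "\<mu> a" arbitrary: a rule: less_induct)
  case less
  show ?case
  proof (cases "rirred R a")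
    case True
    have "\<mu> 1 = 0" using mu_zero[of 1] by (simp add: runit_def)
    moreover have "\<mu> a \<noteq> 0" using mu_zero[OF less.prems(1,2)] less.prems(3) by simp
    ultimately show ?thesis using irr_prime[OF True] by (intro exI[of _ a] exI[of _ 1]) simp
  next
    case False
    then obtain x y where xy: "x \<in> R" "y \<in> R" "a = x * y" "\<not> runit R x" "\<not> runit R y"
      using less.prems unfolding rirred_def by blast
    have x0: "x \<noteq> 0" and y0: "y \<noteq> 0" using xy(3) less.prems(2) by auto
    have "\<mu> y \<noteq> 0" using mu_zero[OF xy(2) y0] xy(5) by simp
    then have "\<mu> x < \<mu> a" using mu_mult[OF xy(1,2) x0 y0] xy(3) by simp
    from less.hyps[OF this xy(1) x0 xy(4)] obtain p c where
      pc: "rprime R p" "c \<in> R" "x = p * c" "\<mu> c < \<mu> x" by blast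
    have c0: "c \<noteq> 0" using pc(3) x0 by auto
    have "a = p * (c * y)" using pc(3) xy(3) by (simp add: mult.assoc)
    moreover have "\<mu> (c * y) < \<mu> a"
      using mu_mult[OF pc(2) xy(2) c0 y0] mu_mult[OF xy(1,2) x0 y0] xy(3) pc(4) by simp
    ultimately show ?thesis using pc(1,2) xy(2) by (intro exI[of _ p] exI[of _ "c * y"]) auto
  qed
qed

lemma gauss_prime:
  assumes p: "rprime R p" and a: "a \<in> PR R" and b: "b \<in> PR R"
    and ab: "\<forall>i. rdvd R p (coeff (a * b) i)"
  shows "(\<forall>i. rdvd R p (coeff a i)) \<or> (\<forall>i. rdvd R p (coeff b i))"
proof (rule ccontr)
  assume "\<not> ?thesis"
  then obtain i0 j0 where "\<not> rdvd R p (coeff a i0)" "\<not> rdvd R p (coeff b j0)" by blast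
  define i where "i = (LEAST i. \<not> rdvd R p (coeff a i))"
  define j where "j = (LEAST j. \<not> rdvd R p (coeff b j))"
  have ni: "\<not> rdvd R p (coeff a i)" unfolding i_def by (rule LeastI) fact
  have nj: "\<not> rdvd R p (coeff b j)" unfolding j_def by (rule LeastI) fact
  have li: "rdvd R p (coeff a k)" if "k < i" for k using not_less_Least[OF that[unfolded i_def]] i_def by blast
  have lj: "rdvd R p (coeff b k)" if "k < j" for k using not_less_Least[OF that[unfolded j_def]] j_def by blast
  have fin: "finite {..i + j}" by simp
  have iin: "i \<in> {..i + j}" by simp
  have "coeff (a * b) (i + j) = coeff a i * coeff b (i + j - i) + (\<Sum>k\<in>{..i + j} - {i}. coeff a k * coeff b (i + j - k))"
    unfolding coeff_mult by (rule sum.remove[OF fin iin])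
  moreover have "rdvd R p (\<Sum>k\<in>{..i + j} - {i}. coeff a k * coeff b (i + j - k))"
  proof (rule rdvd_sum)
    fix k assume k: "k \<in> {..i + j} - {i}"
    show "rdvd R p (coeff a k * coeff b (i + j - k))"
    proof (cases "k < i")
      case True
      then show ?thesis using li[OF True] by (intro rdvd_mult_right PR_coeff b)
    next
      case False
      then have "i + j - k < j" using k by auto
      then show ?thesis using lj by (intro rdvd_mult_left PR_coeff a) auto
    qed
  qed
  ultimately have "rdvd R p (coeff a i * coeff b j)"
    using rdvd_diff[OF ab[rule_format, of "i + j"]] by fastforce
  then show False using p ni nj PR_coeff[OF a] PR_coeff[OF b] unfolding rprime_def by blast
qed

lemma const_divide:
  assumes c: "c \<in> R" "c \<noteq> 0" and a: "a \<in> PR R" and d: "\<forall>i. rdvd R c (coeff a i)"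
  shows "\<exists>a'\<in>PR R. a = smult c a'"
proof -
  define f where "f x = (SOME d. d \<in> R \<and> x = c * d)" for x
  have f: "f x \<in> R \<and> x = c * f x" if "rdvd R c x" for x
    using that unfolding f_def rdvd_def by (metis (mono_tags, lifting) someI_ex)
  have f0: "f 0 = 0" using f[OF rdvd_0] c(2) by simp
  define a' where "a' = Poly (map f (coeffs a))"
  have ca: "coeff a' i = f (coeff a i)" for i
    unfolding a'_def coeff_Poly_eq nth_default_map_eq[of f 0 0, OF f0] nth_default_coeffs_eq ..
  have "a' \<in> PR R" using f d by (simp add: PR_def ca)
  moreover have "a = smult c a'"
    by (rule poly_eqI) (use f d in \<open>simp add: ca\<close>)
  ultimately show ?thesis by blast
qed

lemma smult_PR_cancel:
  fixes p q :: "'a poly"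
  assumes "c \<noteq> 0" "smult c p = smult c q" shows "p = q"
proof -
  have "smult c (p - q) = 0" using assms(2) by (simp add: smult_diff_right)
  then show ?thesis using assms(1) by simp
qed

lemma smult_const: "smult c p = [:c:] * p" by simp

lemma irred_primitive:
  assumes f: "rirred (PR R) f" and df: "degree f > 0" and p: "rprime R p"
  shows "\<not> (\<forall>i. rdvd R p (coeff f i))"
proof
  assume d: "\<forall>i. rdvd R p (coeff f i)"
  have pR: "p \<in> R" "p \<noteq> 0" "\<not> runit R p" using p by (auto simp: rprime_def)
  have fPR: "f \<in> PR R" using f by (simp add: rirred_def)
  obtain f' where f': "f' \<in> PR R" "f = smult p f'" using const_divide[OF pR(1,2) fPR d] by blast
  have "f = [:p:] * f'" using f'(2) by simp
  moreover have "[:p:] \<in> PR R" using pR by simp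
  ultimately have "runit (PR R) [:p:] \<or> runit (PR R) f'" using f f'(1) unfolding rirred_def by blast
  moreover have "\<not> runit (PR R) [:p:]" using pR(3) by (simp add: runit_PR)
  moreover have "degree f' = degree f" using f'(2) pR(2) by simp
  then have "\<not> runit (PR R) f'" using df by (simp add: runit_PR)
  ultimately show False by blast
qed

lemma coeff_dvd_of_eq:
  assumes "c \<in> R" "p \<in> R" "g \<in> PR R" "smult c g = h" "rdvd R p c"
  shows "rdvd R p (coeff h i)"
proof -
  have "coeff h i = c * coeff g i" using assms(4) by auto
  then show ?thesis using rdvd_mult_right[OF assms(5) PR_coeff[OF assms(3)]] by simp
qed

lemma cancel_const:
  assumes f: "rirred (PR R) f" and df: "degree f > 0"
  shows "c \<in> R \<Longrightarrow> c \<noteq> 0 \<Longrightarrow> g \<in> PR R \<Longrightarrow> k \<in> PR R \<Longrightarrow> smult c g = f * k \<Longrightarrow> rdvd (PR R) f g"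
proof (induction "\<mu> c" arbitrary: c k rule: less_induct)
  case less
  have fPR: "f \<in> PR R" using f by (simp add: rirred_def)
  show ?case
  proof (cases "runit R c")
    case True
    then obtain c' where c': "c' \<in> R" "c * c' = 1" by (auto simp: runit_def)
    have "g = smult c' (smult c g)" using c'(2) by (simp add: mult.commute)
    also have "\<dots> = f * smult c' k" using less.prems(5) by simp
    finally show ?thesis unfolding rdvd_def using c'(1) less.prems(4) by blast
  next
    case False
    obtain p c0 where pc: "rprime R p" "c0 \<in> R" "c = p * c0" "\<mu> c0 < \<mu> c"
      using prime_factor_exists[OF less.prems(1,2) False] by blast
    have pR: "p \<in> R" "p \<noteq> 0" using pc(1) by (auto simp: rprime_def)
    have c00: "c0 \<noteq> 0" using pc(3) less.prems(2) by auto
    have "rdvd R p (coeff (f * k) i)" for i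
      using coeff_dvd_of_eq[OF less.prems(1) pR(1) less.prems(3) less.prems(5)] pc(2,3) pR(1)
      by (simp add: rdvd_times)
    then have "(\<forall>i. rdvd R p (coeff f i)) \<or> (\<forall>i. rdvd R p (coeff k i))"
      using gauss_prime[OF pc(1) fPR less.prems(4)] by blast
    then have "\<forall>i. rdvd R p (coeff k i)" using irred_primitive[OF f df pc(1)] by blast
    then obtain k' where k': "k' \<in> PR R" "k = smult p k'"
      using const_divide[OF pR less.prems(4)] by blast
    have "smult p (smult c0 g) = smult p (f * k')"
      using less.prems(5) pc(3) k'(2) by (simp add: mult.commute)
    then have "smult c0 g = f * k'" using smult_PR_cancel[OF pR(2)] by blast
    then show ?thesis using less.hyps[OF pc(4) pc(2) c00 less.prems(3) k'(1)] by blast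
  qed
qed

lemma split_const:
  assumes f: "rirred (PR R) f"
  shows "c \<in> R \<Longrightarrow> c \<noteq> 0 \<Longrightarrow> w \<in> PR R \<Longrightarrow> q \<in> PR R \<Longrightarrow> smult c f = w * q \<Longrightarrow>
    \<exists>w' q'. w' \<in> PR R \<and> q' \<in> PR R \<and> f = w' * q' \<and> degree w' = degree w \<and> degree q' = degree q"
proof (induction "\<mu> c" arbitrary: c w q rule: less_induct)
  case less
  have fPR: "f \<in> PR R" using f by (simp add: rirred_def)
  show ?case
  proof (cases "runit R c")
    case True
    then obtain c' where c': "c' \<in> R" "c * c' = 1" by (auto simp: runit_def)
    have c'0: "c' \<noteq> 0" using c'(2) by auto
    have "f = smult c' (smult c f)" using c'(2) by (simp add: mult.commute)
    also have "\<dots> = w * smult c' q" using less.prems(5) by simp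
    finally show ?thesis using c'(1) c'0 less.prems(3,4) by (intro exI[of _ w] exI[of _ "smult c' q"]) auto
  next
    case False
    obtain p c0 where pc: "rprime R p" "c0 \<in> R" "c = p * c0" "\<mu> c0 < \<mu> c"
      using prime_factor_exists[OF less.prems(1,2) False] by blast
    have pR: "p \<in> R" "p \<noteq> 0" using pc(1) by (auto simp: rprime_def)
    have c00: "c0 \<noteq> 0" using pc(3) less.prems(2) by auto
    have "rdvd R p (coeff (w * q) i)" for i
      using coeff_dvd_of_eq[OF less.prems(1) pR(1) fPR less.prems(5)] pc(2,3) pR(1)
      by (simp add: rdvd_times)
    then have "(\<forall>i. rdvd R p (coeff w i)) \<or> (\<forall>i. rdvd R p (coeff q i))"
      using gauss_prime[OF pc(1) less.prems(3,4)] by blast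
    then show ?thesis
    proof
      assume "\<forall>i. rdvd R p (coeff w i)"
      then obtain w' where w': "w' \<in> PR R" "w = smult p w'"
        using const_divide[OF pR less.prems(3)] by blast
      have "smult p (smult c0 f) = smult p (w' * q)"
        using less.prems(5) pc(3) w'(2) by (simp add: mult.commute)
      then have "smult c0 f = w' * q" using smult_PR_cancel[OF pR(2)] by blast
      from less.hyps[OF pc(4) pc(2) c00 w'(1) less.prems(4) this]
      show ?thesis using w'(2) pR(2) by simp
    next
      assume "\<forall>i. rdvd R p (coeff q i)"
      then obtain q' where q': "q' \<in> PR R" "q = smult p q'"
        using const_divide[OF pR less.prems(4)] by blast
      have "smult p (smult c0 f) = smult p (w * q')"
        using less.prems(5) pc(3) q'(2) by (simp add: mult.commute)
      then have "smult c0 f = w * q'" using smult_PR_cancel[OF pR(2)] by blast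
      from less.hyps[OF pc(4) pc(2) c00 less.prems(3) q'(1) this]
      show ?thesis using q'(2) pR(2) by simp
    qed
  qed
qed

lemma pseudo_div:
  assumes w: "w \<in> PR R" "w \<noteq> 0"
  shows "a \<in> PR R \<Longrightarrow> \<exists>k q r. q \<in> PR R \<and> r \<in> PR R \<and> smult (lead_coeff w ^ k) a = w * q + r \<and> (r = 0 \<or> degree r < degree w)"
proof (induction "degree a" arbitrary: a rule: less_induct)
  case less
  show ?case
  proof (cases "a = 0 \<or> degree a < degree w")
    case True
    then show ?thesis using less.prems by (intro exI[of _ 0] exI[of _ 0] exI[of _ a]) auto
  next
    case False
    then have a0: "a \<noteq> 0" and dw: "degree w \<le> degree a" by auto
    define d where "d = degree a - degree w"
    define a' where "a' = smult (lead_coeff w) a - monom (lead_coeff a) d * w"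
    have a'PR: "a' \<in> PR R" unfolding a'_def using less.prems w(1)
      by (intro PR_diff PR_smult PR_mult PR_monom lc_R)
    have ca': "coeff a' n = 0" if "n \<ge> degree a" for n
    proof (cases "n = degree a")
      case True
      have "coeff (monom (lead_coeff a) d * w) (degree a) = lead_coeff a * lead_coeff w"
        using dw by (simp add: coeff_monom_mult d_def)
      then show ?thesis using True by (simp add: a'_def)
    next
      case False
      then have "n > degree a" using that by simp
      then have "coeff a n = 0" "coeff w (n - d) = 0" using dw
        by (auto simp: coeff_eq_0 d_def)
      then show ?thesis by (simp add: a'_def coeff_monom_mult)
    qed
    have deg: "a' = 0 \<or> degree a' < degree a"
    proof (cases "a' = 0")
      case False
      then have "a' \<noteq> 0" .
      have "degree a' \<le> degree a" using ca' by (intro degree_le) auto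
      moreover have "degree a' \<noteq> degree a"
      proof
        assume "degree a' = degree a"
        then have "lead_coeff a' = 0" using ca'[of "degree a"] by simp
        then show False using \<open>a' \<noteq> 0\<close> by simp
      qed
      ultimately show ?thesis by simp
    qed simp
    have eqa: "smult (lead_coeff w) a = a' + monom (lead_coeff a) d * w" by (simp add: a'_def)
    show ?thesis
    proof (cases "a' = 0")
      case True
      then have "smult (lead_coeff w ^ 1) a = w * monom (lead_coeff a) d + 0" using eqa by (simp add: mult.commute)
      then show ?thesis using less.prems
        by (intro exI[of _ 1] exI[of _ "monom (lead_coeff a) d"] exI[of _ 0]) (auto intro!: PR_monom lc_R)
    next
      case False
      then have "degree a' < degree a" using deg by simp
      from less.hyps[OF this a'PR] obtain k q r where
        kqr: "q \<in> PR R" "r \<in> PR R" "smult (lead_coeff w ^ k) a' = w * q + r" "r = 0 \<or> degree r < degree w"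
        by blast
      have "smult (lead_coeff w ^ Suc k) a = smult (lead_coeff w ^ k) (smult (lead_coeff w) a)"
        by (simp add: mult.commute)
      also have "\<dots> = smult (lead_coeff w ^ k) a' + smult (lead_coeff w ^ k) (monom (lead_coeff a) d * w)"
        unfolding eqa by (simp add: smult_add_right)
      also have "\<dots> = w * (q + smult (lead_coeff w ^ k) (monom (lead_coeff a) d)) + r"
        unfolding kqr(3) by (simp add: algebra_simps)
      finally show ?thesis using kqr less.prems w
        by (intro exI[of _ "Suc k"] exI[of _ "q + smult (lead_coeff w ^ k) (monom (lead_coeff a) d)"] exI[of _ r])
           (auto intro!: PR_add PR_smult Rpow lc_R PR_monom)
    qed
  qed
qed

lemma rirred_PR_const:
  assumes f: "rirred (PR R) f" and d: "degree f = 0"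
  shows "rirred R (coeff f 0)"
proof -
  have fPR: "f \<in> PR R" and f0: "f \<noteq> 0" and fu: "\<not> runit (PR R) f"
    and fi: "\<forall>a\<in>PR R. \<forall>b\<in>PR R. f = a * b \<longrightarrow> runit (PR R) a \<or> runit (PR R) b"
    using f by (auto simp: rirred_def)
  have e: "f = [:coeff f 0:]" using degree_0_id[OF d] by simp
  have "coeff f 0 \<in> R" using fPR by (simp add: PR_coeff)
  moreover have "coeff f 0 \<noteq> 0" using f0 e by (metis pCons_0_0)
  moreover have "\<not> runit R (coeff f 0)" using fu fPR d by (simp add: runit_PR)
  moreover have "runit R a \<or> runit R b" if ab: "a \<in> R" "b \<in> R" "coeff f 0 = a * b" for a b
  proof -
    have "f = [:a:] * [:b:]" using e ab(3) by simp
    then have "runit (PR R) [:a:] \<or> runit (PR R) [:b:]" using fi ab(1,2) by simp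
    then show ?thesis by (auto simp: runit_PR)
  qed
  ultimately show ?thesis by (simp add: rirred_def)
qed

lemma irred_prime_PR:
  assumes f: "rirred (PR R) f" shows "rprime (PR R) f"
proof -
  have fPR: "f \<in> PR R" and f0: "f \<noteq> 0" and fu: "\<not> runit (PR R) f"
    using f by (auto simp: rirred_def)
  have main: "rdvd (PR R) f g \<or> rdvd (PR R) f h"
    if g: "g \<in> PR R" and h: "h \<in> PR R" and gh: "rdvd (PR R) f (g * h)" for g h
  proof -
    obtain t where t: "t \<in> PR R" "g * h = f * t" using gh unfolding rdvd_def by blast
    show ?thesis
    proof (cases "degree f = 0")
      case True
      define c where "c = coeff f 0"
      have e: "f = [:c:]" using degree_0_id[OF True] by (simp add: c_def)
      have cp: "rprime R c" unfolding c_def by (rule irr_prime[OF rirred_PR_const[OF f True]])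
      have cR: "c \<in> R" "c \<noteq> 0" using cp by (auto simp: rprime_def)
      have "rdvd R c (coeff (g * h) i)" for i
        using t(2) e PR_coeff[OF t(1)] cR(1) by (simp add: rdvd_times)
      then have "(\<forall>i. rdvd R c (coeff g i)) \<or> (\<forall>i. rdvd R c (coeff h i))"
        using gauss_prime[OF cp g h] by blast
      then show ?thesis
      proof
        assume "\<forall>i. rdvd R c (coeff g i)"
        then obtain g' where "g' \<in> PR R" "g = smult c g'" using const_divide[OF cR g] by blast
        then show ?thesis unfolding rdvd_def using e by auto
      next
        assume "\<forall>i. rdvd R c (coeff h i)"
        then obtain h' where "h' \<in> PR R" "h = smult c h'" using const_divide[OF cR h] by blast
        then show ?thesis unfolding rdvd_def using e by auto
      qed
    next
      case False
      then have df: "degree f > 0" by simp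
      define D where "D = {w. w \<in> PR R \<and> w \<noteq> 0 \<and> (\<exists>c\<in>R. c \<noteq> 0 \<and> (\<exists>u\<in>PR R. \<exists>v\<in>PR R. smult c w = u * f + v * g))}"
      have "smult 1 f = 1 * f + 0 * g" by simp
      then have "f \<in> D" unfolding D_def using fPR f0 R1 PR_1 PR_0 one_neq_zero by blast
      then obtain w where wD: "w \<in> D" and wmin: "\<And>w'. w' \<in> D \<Longrightarrow> degree w \<le> degree w'"
        using ex_has_least_nat[of "\<lambda>w. w \<in> D" f degree] by blast
      from wD obtain c u v where w: "w \<in> PR R" "w \<noteq> 0" and c: "c \<in> R" "c \<noteq> 0"
        and uv: "u \<in> PR R" "v \<in> PR R" "smult c w = u * f + v * g"
        unfolding D_def by blast
      have lcw: "lead_coeff w \<in> R" "lead_coeff w \<noteq> 0" using w by (auto intro: lc_R)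
      have K: "\<exists>c1\<in>R. c1 \<noteq> 0 \<and> (\<exists>q\<in>PR R. smult c1 a = w * q)"
        if a: "a \<in> PR R" and c': "c' \<in> R" "c' \<noteq> 0" and uv': "u' \<in> PR R" "v' \<in> PR R"
          "smult c' a = u' * f + v' * g" for a c' u' v'
      proof -
        obtain k q r where kqr: "q \<in> PR R" "r \<in> PR R" "smult (lead_coeff w ^ k) a = w * q + r"
          "r = 0 \<or> degree r < degree w"
          using pseudo_div[OF w a] by blast
        have "r = 0"
        proof (rule ccontr)
          assume r0: "r \<noteq> 0"
          then have dr: "degree r < degree w" using kqr(4) by simp
          have "smult (c * c') r = smult c (smult c' (smult (lead_coeff w ^ k) a)) - smult c' (smult c w * q)"
            using kqr(3) by (simp add: algebra_simps smult_add_right)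
          also have "\<dots> = smult (c * lead_coeff w ^ k) (smult c' a) - smult c' ((u * f + v * g) * q)"
            unfolding uv(3) by (simp add: algebra_simps smult_add_right)
          also have "\<dots> = (smult (c * lead_coeff w ^ k) u' - smult c' (u * q)) * f
              + (smult (c * lead_coeff w ^ k) v' - smult c' (v * q)) * g"
            unfolding uv'(3) by (simp add: algebra_simps smult_add_right)
          finally have eq: "smult (c * c') r = (smult (c * lead_coeff w ^ k) u' - smult c' (u * q)) * f
              + (smult (c * lead_coeff w ^ k) v' - smult c' (v * q)) * g" .
          have "r \<in> D" unfolding D_def
          proof (intro CollectI conjI bexI[of _ "c * c'"])
            show "r \<in> PR R" "r \<noteq> 0" by fact+
            show "c * c' \<in> R" using c c' by blast
            show "c * c' \<noteq> 0" using c c' by simp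
            show "\<exists>u\<in>PR R. \<exists>v\<in>PR R. smult (c * c') r = u * f + v * g"
              using eq c c'(1) lcw uv uv' kqr(1)
              by (intro bexI[of _ "smult (c * lead_coeff w ^ k) u' - smult c' (u * q)"]
                        bexI[of _ "smult (c * lead_coeff w ^ k) v' - smult c' (v * q)"])
                 (auto intro!: PR_diff PR_smult PR_mult Rmult Rpow)
          qed
          then show False using wmin[of r] dr by simp
        qed
        then show ?thesis using kqr(1,3) lcw
          by (intro bexI[of _ "lead_coeff w ^ k"] conjI bexI[of _ q]) auto
      qed
      obtain c1 q1 where c1: "c1 \<in> R" "c1 \<noteq> 0" and q1: "q1 \<in> PR R" "smult c1 f = w * q1"
        using K[OF fPR R1 one_neq_zero PR_1 PR_0] by auto
      obtain w' q' where wq': "w' \<in> PR R" "q' \<in> PR R" "f = w' * q'" "degree w' = degree w" "degree q' = degree q1"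
        using split_const[OF f c1 w(1) q1] by blast
      have "runit (PR R) w' \<or> runit (PR R) q'" using f wq'(1-3) unfolding rirred_def by blast
      then show ?thesis
      proof
        assume "runit (PR R) w'"
        then have dw: "degree w = 0" using wq'(4) by (simp add: runit_PR)
        define e where "e = coeff w 0"
        have we: "w = [:e:]" using degree_0_id[OF dw] by (simp add: e_def)
        have eR1: "e \<in> R" unfolding e_def by (rule PR_coeff[OF w(1)])
        have eR2: "e \<noteq> 0"
        proof
          assume "e = 0" then have "w = 0" using we by simp
          then show False using w(2) by simp
        qed
        note eR = eR1 eR2
        have "smult (c * e) h = smult c w * h" using we by simp
        also have "\<dots> = f * (u * h + v * t)" unfolding uv(3) using t(2)
          by (simp add: algebra_simps)
        finally have "smult (c * e) h = f * (u * h + v * t)" .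
        moreover have "u * h + v * t \<in> PR R" using uv t h by blast
        moreover have "c * e \<in> R" "c * e \<noteq> 0" using c eR by auto
        ultimately have "rdvd (PR R) f h"
          using cancel_const[OF f df, of "c * e" h "u * h + v * t"] h by blast
        then show ?thesis ..
      next
        assume "runit (PR R) q'"
        then have dq: "degree q1 = 0" using wq'(5) by (simp add: runit_PR)
        define e where "e = coeff q1 0"
        have qe: "q1 = [:e:]" using degree_0_id[OF dq] by (simp add: e_def)
        have eR: "e \<in> R" using q1 by (auto simp: e_def PR_coeff)
        have e0: "e \<noteq> 0" using q1(2) qe c1(2) f0 by auto
        have sw: "smult c1 f = smult e w" using q1(2) qe by (simp add: mult.commute)
        obtain c3 q3 where c3: "c3 \<in> R" "c3 \<noteq> 0" and q3: "q3 \<in> PR R" "smult c3 g = w * q3"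
          using K[OF g R1 one_neq_zero PR_0 PR_1] by auto
        have "smult (e * c3) g = smult e (smult c3 g)" by simp
        also have "\<dots> = smult e (w * q3)" using q3(2) by simp
        also have "\<dots> = smult e w * q3" by simp
        also have "\<dots> = f * smult c1 q3" unfolding sw[symmetric] by (simp add: mult.commute)
        finally have "smult (e * c3) g = f * smult c1 q3" .
        moreover have "smult c1 q3 \<in> PR R" using c1 q3 by blast
        moreover have "e * c3 \<in> R" "e * c3 \<noteq> 0" using c3 eR e0 by auto
        ultimately have "rdvd (PR R) f g"
          using cancel_const[OF f df, of "e * c3" g "smult c1 q3"] g by blast
        then show ?thesis ..
      qed
    qed
  qed
  show ?thesis unfolding rprime_def using fPR f0 fu main by blast
qed

lemma ufdR_PR: "ufdR (PR R) (\<lambda>p. degree p + \<mu> (lead_coeff p))"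
proof
  show "sr (PR R)" unfolding sr_def by auto
  show "rprime (PR R) p" if "rirred (PR R) p" for p using irred_prime_PR[OF that] .
  show "degree (a * b) + \<mu> (lead_coeff (a * b)) = degree a + \<mu> (lead_coeff a) + (degree b + \<mu> (lead_coeff b))"
    if "a \<in> PR R" "b \<in> PR R" "a \<noteq> 0" "b \<noteq> 0" for a b
  proof -
    have "\<mu> (lead_coeff (a * b)) = \<mu> (lead_coeff a) + \<mu> (lead_coeff b)"
      unfolding lead_coeff_mult using that by (intro mu_mult lc_R) auto
    then show ?thesis using degree_mult_eq[OF that(3,4)] by simp
  qed
  show "(degree a + \<mu> (lead_coeff a) = 0) = runit (PR R) a" if "a \<in> PR R" "a \<noteq> 0" for a
    using that mu_zero[OF lc_R[OF that(1)]] by (auto simp: runit_PR)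
qed

end


lemma ufdR_transfer:
  fixes \<phi> :: "'a::idom \<Rightarrow> 'b::idom"
  assumes u: "ufdR A \<mu>"
    and hm: "\<And>x y. \<phi> (x * y) = \<phi> x * \<phi> y" and ha: "\<And>x y. \<phi> (x + y) = \<phi> x + \<phi> y"
    and h1: "\<phi> 1 = 1"
    and inj: "inj_on \<phi> A" and img: "\<phi> ` A = B"
  shows "ufdR B (\<lambda>b. \<mu> (inv_into A \<phi> b))"
proof -
  interpret ufdR A \<mu> by fact
  define \<iota> where "\<iota> = inv_into A \<phi>"
  have h0: "\<phi> 0 = 0"
  proof -
    have "\<phi> 0 = \<phi> 0 + \<phi> 0" using ha[of 0 0] by (simp only: add_0)
    then show ?thesis by (simp only: add_cancel_right_right)
  qed
  have hn: "\<phi> (- x) = - \<phi> x" for x using ha[of x "- x"] h0 by (simp add: eq_neg_iff_add_eq_0 add.commute)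
  have iA: "\<iota> b \<in> A" if "b \<in> B" for b using that img unfolding \<iota>_def by (auto intro: inv_into_into)
  have fi: "\<phi> (\<iota> b) = b" if "b \<in> B" for b using that img unfolding \<iota>_def by (auto intro: f_inv_into_f)
  have if': "\<iota> (\<phi> a) = a" if "a \<in> A" for a unfolding \<iota>_def by (rule inv_into_f_f[OF inj that])
  have fB: "\<phi> a \<in> B" if "a \<in> A" for a using that img by blast
  have eqA: "\<phi> a = \<phi> a' \<longleftrightarrow> a = a'" if "a \<in> A" "a' \<in> A" for a a' using inj that by (auto dest: inj_onD)
  have i0: "\<iota> b = 0 \<longleftrightarrow> b = 0" if "b \<in> B" for b
    using that fi[OF that] h0 by (metis if' R0)
  have imul: "\<iota> (b * c) = \<iota> b * \<iota> c" if "b \<in> B" "c \<in> B" for b c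
  proof -
    have "b * c = \<phi> (\<iota> b * \<iota> c)" using fi that hm by simp
    then show ?thesis using if'[OF Rmult[OF iA[OF that(1)] iA[OF that(2)]]] by simp
  qed
  have B0: "0 \<in> B" using fB[OF R0] h0 by simp
  have B1: "1 \<in> B" using fB[OF R1] h1 by simp
  have Badd: "b + c \<in> B" if "b \<in> B" "c \<in> B" for b c
    using fB[OF Radd[OF iA[OF that(1)] iA[OF that(2)]]] ha fi that by simp
  have Bmul: "b * c \<in> B" if "b \<in> B" "c \<in> B" for b c
    using fB[OF Rmult[OF iA[OF that(1)] iA[OF that(2)]]] hm fi that by simp
  have Bneg: "- b \<in> B" if "b \<in> B" for b
    using fB[OF Rneg[OF iA[OF that]]] hn fi that by simp
  have runit_iff: "runit B b \<longleftrightarrow> runit A (\<iota> b)" if b: "b \<in> B" for b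
  proof
    assume "runit B b"
    then obtain c where c: "c \<in> B" "b * c = 1" by (auto simp: runit_def)
    have "\<iota> b * \<iota> c = \<iota> 1" using imul[OF b c(1)] c(2) by simp
    also have "\<iota> 1 = 1" using if'[OF R1] h1 by simp
    finally show "runit A (\<iota> b)" using iA[OF b] iA[OF c(1)] by (auto simp: runit_def)
  next
    assume "runit A (\<iota> b)"
    then obtain c where c: "c \<in> A" "\<iota> b * c = 1" by (auto simp: runit_def)
    have "b * \<phi> c = 1" using arg_cong[OF c(2), of \<phi>] hm fi[OF b] h1 by simp
    then show "runit B b" using b fB[OF c(1)] by (auto simp: runit_def)
  qed
  have rdvd_iff: "rdvd B b c \<longleftrightarrow> rdvd A (\<iota> b) (\<iota> c)" if b: "b \<in> B" and c: "c \<in> B" for b c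
  proof
    assume "rdvd B b c"
    then obtain d where d: "d \<in> B" "c = b * d" by (auto simp: rdvd_def)
    then show "rdvd A (\<iota> b) (\<iota> c)" using imul[OF b d(1)] iA[OF d(1)] by (auto simp: rdvd_def)
  next
    assume "rdvd A (\<iota> b) (\<iota> c)"
    then obtain d where d: "d \<in> A" "\<iota> c = \<iota> b * d" by (auto simp: rdvd_def)
    have "c = b * \<phi> d" using arg_cong[OF d(2), of \<phi>] hm fi b c by simp
    then show "rdvd B b c" using fB[OF d(1)] by (auto simp: rdvd_def)
  qed
  have rirred_iff: "rirred A (\<iota> b)" if b: "b \<in> B" and r: "rirred B b" for b
  proof -
    have "\<iota> b \<noteq> 0" using r i0[OF b] by (simp add: rirred_def)
    moreover have "\<not> runit A (\<iota> b)" using r runit_iff[OF b] by (simp add: rirred_def)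
    moreover have "runit A x \<or> runit A y" if xy: "x \<in> A" "y \<in> A" "\<iota> b = x * y" for x y
    proof -
      have "b = \<phi> x * \<phi> y" using arg_cong[OF xy(3), of \<phi>] hm fi[OF b] by simp
      then have "runit B (\<phi> x) \<or> runit B (\<phi> y)" using r fB[OF xy(1)] fB[OF xy(2)] unfolding rirred_def by blast
      then show ?thesis using runit_iff fB xy(1,2) if' by metis
    qed
    ultimately show ?thesis using iA[OF b] by (simp add: rirred_def)
  qed
  show ?thesis
  proof
    show "sr B" unfolding sr_def using B0 B1 Badd Bmul Bneg by blast
    show "rprime B p" if "rirred B p" for p
    proof -
      have pB: "p \<in> B" using that by (simp add: rirred_def)
      have pr: "rprime A (\<iota> p)" by (rule irr_prime[OF rirred_iff[OF pB that]])
      have "rdvd B p a \<or> rdvd B p b" if ab: "a \<in> B" "b \<in> B" "rdvd B p (a * b)" for a b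
      proof -
        have "rdvd A (\<iota> p) (\<iota> a * \<iota> b)" using rdvd_iff[OF pB Bmul[OF ab(1,2)]] ab imul by simp
        then have "rdvd A (\<iota> p) (\<iota> a) \<or> rdvd A (\<iota> p) (\<iota> b)" using pr iA ab(1,2) unfolding rprime_def by blast
        then show ?thesis using rdvd_iff pB ab(1,2) by blast
      qed
      then show ?thesis using that unfolding rprime_def rirred_def by blast
    qed
    show "\<mu> (inv_into A \<phi> (a * b)) = \<mu> (inv_into A \<phi> a) + \<mu> (inv_into A \<phi> b)"
      if "a \<in> B" "b \<in> B" "a \<noteq> 0" "b \<noteq> 0" for a b
      using imul[OF that(1,2)] mu_mult[OF iA[OF that(1)] iA[OF that(2)]] i0 that unfolding \<iota>_def by simp
    show "(\<mu> (inv_into A \<phi> a) = 0) = runit B a" if "a \<in> B" "a \<noteq> 0" for a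
      using mu_zero[OF iA[OF that(1)]] i0[OF that(1)] runit_iff[OF that(1)] that(2) unfolding \<iota>_def by simp
  qed
qed

lemma Salg0_const:
  assumes "f \<in> Salg 0" shows "f = sng 0 (lk f 0)"
proof (rule poly_mapping_eqI)
  fix m :: "nat \<Rightarrow>\<^sub>0 nat"
  show "lk f m = lk (sng 0 (lk f 0)) m"
  proof (cases "m = 0")
    case False
    then obtain i where "i \<in> ks m" by (metis keys_eq_empty ex_in_conv)
    then have "m \<notin> ks f" using SalgD[OF assms, of m i] by auto
    then show ?thesis using False by (simp add: in_keys_iff lookup_single)
  qed simp
qed

lemma ufd_Salg0: "ufdR (Salg 0) (\<lambda>_. 0)"
proof -
  have un: "runit (Salg 0) a" if "a \<in> Salg 0" "a \<noteq> 0" for a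
  proof -
    have e: "a = sng 0 (lk a 0)" by (rule Salg0_const[OF that(1)])
    then have l0: "lk a 0 \<noteq> 0" using that(2) by (metis single_zero)
    have "a * sng 0 (inverse (lk a 0)) = sng 0 (lk a 0 * inverse (lk a 0))"
      by (subst e) (simp add: mult_single)
    also have "\<dots> = 1" using l0 by simp
    finally show ?thesis using that(1) by (auto simp: runit_def intro!: bexI[of _ "sng 0 (inverse (lk a 0))"])
  qed
  show ?thesis
  proof
    show "sr (Salg 0)" unfolding sr_def by (auto intro: Salg_add Salg_mult Salg_uminus)
    show "rprime (Salg 0) p" if "rirred (Salg 0) p" for p
      using that un by (auto simp: rirred_def)
  qed (use un in auto)
qed

lemma ufd_step:
  assumes "ufdR (Salg n) \<mu>"
  shows "\<exists>\<mu>'. ufdR (Salg (Suc n)) \<mu>'"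
proof -
  interpret ufdR "Salg n" \<mu> by fact
  have inj: "inj_on (phi n) (PR (Salg n))"
  proof (rule inj_onI)
    fix p q assume "p \<in> PR (Salg n)" "q \<in> PR (Salg n)" "phi n p = phi n q"
    moreover have "PR (Salg n) \<subseteq> PA n" using Salg_avoid by (auto simp: PR_def PA_def)
    ultimately show "p = q" using phi_inj by blast
  qed
  have img: "phi n ` PR (Salg n) = Salg (Suc n)"
  proof
    show "phi n ` PR (Salg n) \<subseteq> Salg (Suc n)" using phi_Salg by (auto simp: PR_def)
    show "Salg (Suc n) \<subseteq> phi n ` PR (Salg n)"
    proof
      fix f assume "f \<in> Salg (Suc n)"
      then have "psi n f \<in> PR (Salg n)" using psi_Salg by (auto simp: PR_def)
      then show "f \<in> phi n ` PR (Salg n)" using phi_psi[of n f] by (metis image_eqI)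
    qed
  qed
  have "ufdR (Salg (Suc n)) (\<lambda>b. (\<lambda>p. degree p + \<mu> (lead_coeff p)) (inv_into (PR (Salg n)) (phi n) b))"
    by (rule ufdR_transfer[OF ufdR_PR phi_mult phi_add _ inj img]) (simp add: phi_def)
  then show ?thesis by blast
qed

lemma ufd_Salg: "\<exists>\<mu>. ufdR (Salg n) \<mu>"
proof (induction n)
  case 0 then show ?case using ufd_Salg0 by blast
next
  case (Suc n) then show ?case using ufd_step by blast
qed

lemma Salg_irred_prime: "rirred (Salg n) p \<Longrightarrow> rprime (Salg n) p"
  using ufd_Salg[of n] ufdR.irr_prime by blast


lemma pr_carrier[simp]: "carrier (poly_ring A) = A" by (simp add: poly_ring_def)
lemma pr_mult[simp]: "monoid.mult (poly_ring A) = (*)" by (simp add: poly_ring_def)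
lemma pr_one[simp]: "monoid.one (poly_ring A) = 1" by (simp add: poly_ring_def)
lemma pr_zero[simp]: "ring.zero (poly_ring A) = 0" by (simp add: poly_ring_def)

lemma pr_Units: "y \<in> Units (poly_ring A) \<longleftrightarrow> runit A (y :: cpoly)"
  by (auto simp: Units_def runit_def mult.commute)

lemma ring_irred_rirred:
  assumes xS: "x \<in> Salg n" and ri: "ring_irreducible\<^bsub>poly_ring (Salg n)\<^esub> x"
  shows "rirred (Salg n) x"
proof -
  have x0: "x \<noteq> 0" and irr: "Divisibility.irreducible (poly_ring (Salg n)) x"
    using ri by (auto simp: ring_irreducible_def)
  have nu: "\<not> runit (Salg n) x" using irr by (simp add: Divisibility.irreducible_def pr_Units)
  have pf: "\<And>b. b \<in> Salg n \<Longrightarrow> properfactor (poly_ring (Salg n)) b x \<Longrightarrow> runit (Salg n) b"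
    using irr by (simp add: Divisibility.irreducible_def pr_Units)
  have "runit (Salg n) a \<or> runit (Salg n) b" if ab: "a \<in> Salg n" "b \<in> Salg n" "x = a * b" for a b
  proof (rule disjCI)
    assume nb: "\<not> runit (Salg n) b"
    have "a divides\<^bsub>poly_ring (Salg n)\<^esub> x" unfolding factor_def using ab by auto
    moreover have "\<not> x divides\<^bsub>poly_ring (Salg n)\<^esub> a"
    proof
      assume "x divides\<^bsub>poly_ring (Salg n)\<^esub> a"
      then obtain t where t: "t \<in> Salg n" "a = x * t" unfolding factor_def by auto
      have "x * (t * b) = (x * t) * b" by (simp add: mult.assoc)
      also have "\<dots> = a * b" using t(2) by simp
      also have "\<dots> = x * 1" using ab(3) by simp
      finally have "x * (t * b) = x * 1" .
      then have "t * b = 1" by (simp only: mult_left_cancel[OF x0])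
      then have "b * t = 1" by (simp add: mult.commute)
      then have "runit (Salg n) b" unfolding runit_def using ab(2) t(1) by blast
      then show False using nb by contradiction
    qed
    ultimately show "runit (Salg n) a" using pf[OF ab(1)] by (simp add: properfactor_def)
  qed
  then show ?thesis using xS x0 nu by (simp add: rirred_def)
qed

lemma W_S: "f \<in> weight_space n c mu \<Longrightarrow> f \<in> Salg n"
  by (simp add: weight_space_def)

lemma W_0[simp]: "0 \<in> weight_space n c mu"
proof -
  have "adS n c i 0 = 0" for i using adS_const[of n c i 0] by simp
  then show ?thesis by (simp add: weight_space_def)
qed

lemma W_mult:
  assumes a: "a \<in> weight_space n c mu" and b: "b \<in> weight_space n c nu"
  shows "a * b \<in> weight_space n c (\<lambda>i. mu i + nu i)"
proof -
  have "a * b \<in> Salg n" using a b by (intro Salg_mult W_S)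
  moreover have "adS n c i (a * b) = sng 0 (mu i + nu i) * (a * b)" if "i < n" for i
  proof -
    have "adS n c i (a * b) = sng 0 (mu i) * a * b + a * (sng 0 (nu i) * b)"
      using a b that by (simp add: adS_mult weight_space_def)
    also have "\<dots> = sng 0 (mu i + nu i) * (a * b)" by (simp add: single_add algebra_simps)
    finally show ?thesis .
  qed
  ultimately show ?thesis by (simp add: weight_space_def)
qed

lemma Y_W_mult:
  assumes "a \<in> Yinv n c" "b \<in> weight_space n c mu"
  shows "a * b \<in> weight_space n c mu"
  using W_mult[OF assms[unfolded Yinv_def]] by simp

lemma W_neg_mult:
  assumes "a \<in> weight_space n c lam" "b \<in> weight_space n c (\<lambda>i. - lam i)"
  shows "a * b \<in> Yinv n c"
  using W_mult[OF assms] by (simp add: Yinv_def)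

lemma W_div:
  assumes x: "x \<in> weight_space n c lam" "x \<noteq> 0" and h: "h \<in> Salg n" and xh: "x * h \<in> Yinv n c"
  shows "h \<in> weight_space n c (\<lambda>i. - lam i)"
proof -
  have "adS n c i h = sng 0 (- lam i) * h" if "i < n" for i
  proof -
    have "0 = adS n c i (x * h)" using xh that by (simp add: Yinv_def weight_space_def)
    also have "\<dots> = sng 0 (lam i) * x * h + x * adS n c i h"
      using x that by (simp add: adS_mult weight_space_def)
    also have "\<dots> = x * (adS n c i h - sng 0 (- lam i) * h)"
      by (simp add: algebra_simps single_uminus)
    finally have "x * (adS n c i h - sng 0 (- lam i) * h) = 0" by simp
    then show ?thesis using x(2) by simp
  qed
  then show ?thesis using h by (simp add: weight_space_def)
qed

lemma Y_S: "a \<in> Yinv n c \<Longrightarrow> a \<in> Salg n" by (simp add: Yinv_def weight_space_def)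
lemma Y_mult: "a \<in> Yinv n c \<Longrightarrow> b \<in> Yinv n c \<Longrightarrow> a * b \<in> Yinv n c"
  using Y_W_mult[of a n c b "\<lambda>_. 0"] by (simp add: Yinv_def)
lemma Y_1: "1 \<in> Yinv n c"
proof -
  have "adS n c i 1 = 0" for i using adS_const[of n c i 1] by simp
  then show ?thesis by (simp add: Yinv_def weight_space_def)
qed


lemma Y_0: "0 \<in> Yinv n c" by (simp add: Yinv_def)

lemma foldr_Y: "set fs \<subseteq> Yinv n c \<Longrightarrow> foldr (*) fs 1 \<in> Yinv n c"
  by (induction fs) (auto intro: Y_mult Y_1)

lemma Y_prime_factor:
  assumes fd: "factorial_domain (poly_ring (Yinv n c))"
    and xp: "rprime (Salg n) x" and a: "a \<in> Yinv n c" "a \<noteq> 0" and xa: "rdvd (Salg n) x a"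
  shows "\<exists>q. q \<in> Yinv n c \<and> q \<noteq> 0 \<and> Divisibility.prime (mult_of (poly_ring (Yinv n c))) q
           \<and> rdvd (Salg n) x q \<and> rdvd (Yinv n c) q a"
proof -
  let ?G = "mult_of (poly_ring (Yinv n c))"
  have "factorial_monoid ?G" using fd by (simp add: factorial_domain_def)
  then interpret F: factorial_monoid ?G .
  let ?Y = "Yinv n c"
  let ?S = "Salg n"
  have aG: "a \<in> carrier ?G" using a by simp
  obtain fs where fs: "set fs \<subseteq> carrier ?G" "wfactors ?G fs a"
    using F.wfactors_exist[OF aG] by blast
  have fsY: "set fs \<subseteq> ?Y - {0}" using fs(1) by simp
  have irr: "\<forall>q\<in>set fs. Divisibility.irreducible ?G q" using fs(2) by (simp add: wfactors_def)
  define P where "P = foldr (*) fs 1"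
  have PY: "P \<in> ?Y" unfolding P_def using fsY by (intro foldr_Y) auto
  have assoc: "P \<sim>\<^bsub>?G\<^esub> a" using fs(2) unfolding wfactors_def P_def by simp
  obtain c1 where c1: "c1 \<in> ?Y" "c1 \<noteq> 0" "a = P * c1"
    using assoc unfolding associated_def factor_def by auto
  obtain d1 where d1: "d1 \<in> ?Y" "P = a * d1"
    using assoc unfolding associated_def factor_def by auto
  have "a * (d1 * c1) = a * 1" using c1(3) d1(2) by (simp add: mult.assoc mult.commute)
  then have dc: "d1 * c1 = 1" by (rule iffD1[OF mult_left_cancel[OF a(2)]])
  have xS: "x \<in> ?S" and xnu: "\<not> runit ?S x"
    and xpr: "\<And>u v. u \<in> ?S \<Longrightarrow> v \<in> ?S \<Longrightarrow> rdvd ?S x (u * v) \<Longrightarrow> rdvd ?S x u \<or> rdvd ?S x v"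
    using xp by (auto simp: rprime_def)
  have xP: "rdvd ?S x P"
  proof -
    have "rdvd ?S x P \<or> rdvd ?S x c1" using xpr[OF Y_S[OF PY] Y_S[OF c1(1)]] xa c1(3) by simp
    moreover have "\<not> rdvd ?S x c1"
    proof
      assume "rdvd ?S x c1"
      then obtain t where t: "t \<in> ?S" "c1 = x * t" by (auto simp: rdvd_def)
      have "x * (d1 * t) = 1" using dc t(2) by (simp add: algebra_simps)
      moreover have "d1 * t \<in> ?S" using Y_S[OF d1(1)] t(1) by (rule Salg_mult)
      ultimately have "runit ?S x" using xS unfolding runit_def by blast
      then show False using xnu by contradiction
    qed
    ultimately show ?thesis by blast
  qed
  have L: "set gs \<subseteq> ?Y - {0} \<Longrightarrow> rdvd ?S x (foldr (*) gs 1) \<Longrightarrow>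
           \<exists>q\<in>set gs. rdvd ?S x q \<and> rdvd ?Y q (foldr (*) gs 1)" for gs
  proof (induction gs)
    case Nil
    then obtain t where "t \<in> ?S" "1 = x * t" by (auto simp: rdvd_def)
    then have "runit ?S x" using xS unfolding runit_def by (metis mult.commute)
    then show ?case using xnu by contradiction
  next
    case (Cons q gs)
    have qY: "q \<in> ?Y" and gsY: "set gs \<subseteq> ?Y - {0}" using Cons.prems(1) by auto
    have PY': "foldr (*) gs 1 \<in> ?Y" using gsY by (intro foldr_Y) auto
    have "rdvd ?S x q \<or> rdvd ?S x (foldr (*) gs 1)"
      using xpr[OF Y_S[OF qY] Y_S[OF PY']] Cons.prems(2) by simp
    then show ?case
    proof
      assume "rdvd ?S x q"
      moreover have "rdvd ?Y q (foldr (*) (q # gs) 1)" using PY' by (auto simp: rdvd_def)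
      ultimately show ?thesis by auto
    next
      assume "rdvd ?S x (foldr (*) gs 1)"
      from Cons.IH[OF gsY this] obtain q' where q': "q' \<in> set gs" "rdvd ?S x q'" "rdvd ?Y q' (foldr (*) gs 1)"
        by blast
      then obtain t where t: "t \<in> ?Y" "foldr (*) gs 1 = q' * t" by (auto simp: rdvd_def)
      have "foldr (*) (q # gs) 1 = q' * (q * t)" using t(2) by (simp add: algebra_simps)
      moreover have "q * t \<in> ?Y" using qY t(1) by (rule Y_mult)
      ultimately have "rdvd ?Y q' (foldr (*) (q # gs) 1)" by (auto simp: rdvd_def)
      then show ?thesis using q'(1,2) by auto
    qed
  qed
  obtain q where q: "q \<in> set fs" "rdvd ?S x q" "rdvd ?Y q P" using L[OF fsY xP[unfolded P_def]] P_def by blast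
  have qG: "q \<in> carrier ?G" using q(1) fs(1) by blast
  have "Divisibility.prime ?G q" using F.irreducible_prime[OF _ qG] irr q(1) by blast
  moreover have "rdvd ?Y q a"
  proof -
    obtain t where t: "t \<in> ?Y" "P = q * t" using q(3) by (auto simp: rdvd_def)
    have "a = q * (t * c1)" using c1(3) t(2) by (simp add: mult.assoc)
    moreover have "t * c1 \<in> ?Y" using t(1) c1(1) by (rule Y_mult)
    ultimately show ?thesis by (auto simp: rdvd_def)
  qed
  ultimately show ?thesis using qG q(2) by auto
qed


lemma cancel_nz: "(x :: cpoly) \<noteq> 0 \<Longrightarrow> x * a = x * b \<Longrightarrow> a = b"
  by simp

theorem mainTheorem8:
  fixes n :: nat and c :: "nat \<Rightarrow> nat \<Rightarrow> nat \<Rightarrow> complex"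
    and lam :: "nat \<Rightarrow> complex" and x :: cpoly
  assumes "lie_structure n c"
    and "factorial_domain (poly_ring (Yinv n c))"
    and "x \<in> weight_space n c lam" and "x \<noteq> 0"
    and "ring_irreducible\<^bsub>poly_ring (Salg n)\<^esub> x"
    and "\<exists>i<n. lam i \<noteq> 0"
  shows "free_rank_le_1 (Yinv n c) (weight_space n c lam) \<or>
         free_rank_le_1 (Yinv n c) (weight_space n c (\<lambda>i. - lam i))"
proof -
  note fd = assms(2) and xW = assms(3) and x0 = assms(4)
  let ?S = "Salg n" and ?Y = "Yinv n c" and ?Wp = "weight_space n c lam"
    and ?Wm = "weight_space n c (\<lambda>i. - lam i)"
  let ?G = "mult_of (poly_ring (Yinv n c))"
  have xS: "x \<in> ?S" using xW by (rule W_S)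
  have xp: "rprime ?S x" using Salg_irred_prime[OF ring_irred_rirred[OF xS assms(5)]] .
  show ?thesis
  proof (cases "?Wm = {0}")
    case True
    then show ?thesis by (simp add: free_rank_le_1_def)
  next
    case False
    then obtain y0 where y0: "y0 \<in> ?Wm" "y0 \<noteq> 0" using W_0 by blast
    define Q where "Q = {q. q \<in> ?Y \<and> q \<noteq> 0 \<and> Divisibility.prime ?G q \<and> rdvd ?S x q}"
    have hQ: "\<exists>h\<in>?Wm. q = x * h \<and> h \<noteq> 0" if "q \<in> Q" for q
    proof -
      have "rdvd ?S x q" using that by (simp add: Q_def)
      then obtain h where h: "h \<in> ?S" "q = x * h" unfolding rdvd_def by blast
      have "x * h \<in> ?Y" using that h(2) by (simp add: Q_def)
      then have "h \<in> ?Wm" using W_div[OF xW x0 h(1)] by simp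
      moreover have "h \<noteq> 0" using that h(2) by (auto simp: Q_def)
      ultimately show ?thesis using h(2) by blast
    qed
    have decomp: "\<exists>q h r. q \<in> Q \<and> h \<in> ?Wm \<and> q = x * h \<and> r \<in> ?Y \<and> g = h * r"
      if g: "g \<in> ?Wm" "g \<noteq> 0" for g
    proof -
      have xgY: "x * g \<in> ?Y" using W_neg_mult[OF xW g(1)] .
      have xg0: "x * g \<noteq> 0" using x0 g(2) by simp
      have "rdvd ?S x (x * g)" using W_S[OF g(1)] by (auto simp: rdvd_def)
      from Y_prime_factor[OF fd xp xgY xg0 this] obtain q where
        q: "q \<in> ?Y" "q \<noteq> 0" "Divisibility.prime ?G q" "rdvd ?S x q" "rdvd ?Y q (x * g)" by blast
      then have qQ: "q \<in> Q" by (simp add: Q_def)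
      obtain h where h: "h \<in> ?Wm" "q = x * h" "h \<noteq> 0" using hQ[OF qQ] by blast
      obtain r where r: "r \<in> ?Y" "x * g = q * r" using q(5) by (auto simp: rdvd_def)
      have "x * g = x * (h * r)" using r(2) h(2) by (simp add: mult.assoc)
      then have "g = h * r" using x0 by simp
      then show ?thesis using qQ h r(1) by blast
    qed
    obtain q0 h0 r0 where q0: "q0 \<in> Q" "h0 \<in> ?Wm" "q0 = x * h0"
      using decomp[OF y0] by blast
    show ?thesis
    proof (cases "\<forall>q1\<in>Q. \<forall>q2\<in>Q. rdvd ?Y q1 q2")
      case True
      have h00: "h0 \<noteq> 0" using q0 by (auto simp: Q_def)
      have "?Wm = {a * h0 | a. a \<in> ?Y}"
      proof
        show "?Wm \<subseteq> {a * h0 | a. a \<in> ?Y}"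
        proof
          fix g assume g: "g \<in> ?Wm"
          show "g \<in> {a * h0 | a. a \<in> ?Y}"
          proof (cases "g = 0")
            case True
            then show ?thesis using Y_0 by force
          next
            case False
            then obtain q h r where qhr: "q \<in> Q" "h \<in> ?Wm" "q = x * h" "r \<in> ?Y" "g = h * r"
              using decomp[OF g] by blast
            obtain t where t: "t \<in> ?Y" "q = q0 * t" using True q0(1) qhr(1) by (auto simp: rdvd_def)
            have "x * h = x * (h0 * t)" using t(2) qhr(3) q0(3) by (simp add: mult.assoc)
            then have "h = h0 * t" using x0 by simp
            then have "g = (t * r) * h0" using qhr(5) by (simp add: algebra_simps)
            moreover have "t * r \<in> ?Y" using t(1) qhr(4) by (rule Y_mult)
            ultimately show ?thesis by blast
          qed
        qed
        show "{a * h0 | a. a \<in> ?Y} \<subseteq> ?Wm" using Y_W_mult q0(2) by blast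
      qed
      moreover have "\<forall>a\<in>?Y. a * h0 = 0 \<longrightarrow> a = 0" using h00 by simp
      ultimately have "free_rank_le_1 ?Y ?Wm" unfolding free_rank_le_1_def using q0(2) by blast
      then show ?thesis ..
    next
      case False
      then obtain q1 q2 where q12: "q1 \<in> Q" "q2 \<in> Q" "\<not> rdvd ?Y q1 q2" by blast
      obtain h1 where h1: "h1 \<in> ?Wm" "q1 = x * h1" "h1 \<noteq> 0" using hQ[OF q12(1)] by blast
      obtain h2 where h2: "h2 \<in> ?Wm" "q2 = x * h2" "h2 \<noteq> 0" using hQ[OF q12(2)] by blast
      have q1p: "Divisibility.prime ?G q1" using q12(1) by (simp add: Q_def)
      have q2Y: "q2 \<in> ?Y" "q2 \<noteq> 0" using q12(2) by (auto simp: Q_def)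
      have "?Wp = {a * x | a. a \<in> ?Y}"
      proof
        show "?Wp \<subseteq> {a * x | a. a \<in> ?Y}"
        proof
          fix f assume f: "f \<in> ?Wp"
          show "f \<in> {a * x | a. a \<in> ?Y}"
          proof (cases "f = 0")
            case True
            then show ?thesis using Y_0 by force
          next
            case False
            have f1: "f * h1 \<in> ?Y" "f * h1 \<noteq> 0" using W_neg_mult[OF f h1(1)] False h1(3) by auto
            have f2: "f * h2 \<in> ?Y" "f * h2 \<noteq> 0" using W_neg_mult[OF f h2(1)] False h2(3) by auto
            have eq: "q2 * (f * h1) = q1 * (f * h2)" using h1(2) h2(2) by (simp add: algebra_simps)
            have "q1 divides\<^bsub>?G\<^esub> (q2 * (f * h1))"
              unfolding factor_def using eq f2 by (intro bexI[of _ "f * h2"]) auto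
            then have "q1 divides\<^bsub>?G\<^esub> q2 \<or> q1 divides\<^bsub>?G\<^esub> (f * h1)"
              using q1p q2Y f1 unfolding Divisibility.prime_def by auto
            moreover have "\<not> q1 divides\<^bsub>?G\<^esub> q2"
              using q12(3) unfolding factor_def rdvd_def by auto
            ultimately have "q1 divides\<^bsub>?G\<^esub> (f * h1)" by blast
            then obtain a where a: "a \<in> ?Y" "f * h1 = q1 * a" unfolding factor_def by auto
            have "h1 * f = h1 * (a * x)" using a(2) h1(2) by (simp add: algebra_simps)
            then have "f = a * x" using h1(3) by simp
            then show ?thesis using a(1) by blast
          qed
        qed
        show "{a * x | a. a \<in> ?Y} \<subseteq> ?Wp" using Y_W_mult xW by blast
      qed
      moreover have "\<forall>a\<in>?Y. a * x = 0 \<longrightarrow> a = 0" using x0 by simp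
      ultimately have "free_rank_le_1 ?Y ?Wp" unfolding free_rank_le_1_def using xW by blast
      then show ?thesis ..
    qed
  qed
qed


end
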